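(* Let $p$ be a prime and $R=\mathbb{F}_p[x,x^{-1}]$. For any integers $n>0$, $b>0$ and $0<r\le nb$ there is an additive subgroup $U\subset R^n$ such that $e(U)=b$ and ${\rm rk}_b(U)=r$.
   Context: For an additive subgroup $U$ of an $R$-module, $e(U)$ is the minimal positive integer $e$ with $x^eU=U$ (and $+\infty$ if none). If $x^bU=U$, ${\rm rk}_b(U)$ is the rank of $U$ regarded as an $R$-module via $x\ast u=x^bu$, where the rank of a finitely generated $R$-module is the maximal number of elements freely generating a free submodule ($0$ if none). *)

theory Defs
  imports Main "HOL-Library.Extended_Nat" "HOL-Library.Function_Algebras" "HOL-Computational_Algebra.Primes"
begin

text \<open>
  Model: R = F[x,x^-1] with F a field (of cardinality p in the theorem).
  A Laurent polynomial is a finitely supported function int => F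
  (coefficient of x^k).  An element of R^n is a function
  v :: nat => int => F with v i = 0 for i >= n and finite support;
  v i is the i-th coordinate.
\<close>

definition laurent_vecs :: "nat \<Rightarrow> (nat \<Rightarrow> int \<Rightarrow> 'a::zero) set" where
  "laurent_vecs n = {v. (\<forall>i k. n \<le> i \<longrightarrow> v i k = 0) \<and> finite {(i,k). v i k \<noteq> 0}}"

definition xpow :: "int \<Rightarrow> (nat \<Rightarrow> int \<Rightarrow> 'a) \<Rightarrow> (nat \<Rightarrow> int \<Rightarrow> 'a)" where
  "xpow e v = (\<lambda>i k. v i (k - e))"

definition add_subgroup :: "nat \<Rightarrow> (nat \<Rightarrow> int \<Rightarrow> 'a::ab_group_add) set \<Rightarrow> bool" where
  "add_subgroup n U \<longleftrightarrow> U \<subseteq> laurent_vecs n \<and> 0 \<in> U \<and>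
     (\<forall>u\<in>U. \<forall>v\<in>U. u + v \<in> U) \<and> (\<forall>u\<in>U. - u \<in> U)"

definition e_inv :: "(nat \<Rightarrow> int \<Rightarrow> 'a) set \<Rightarrow> enat" where
  "e_inv U = (if \<exists>e::nat. 0 < e \<and> xpow (int e) ` U = U
              then enat (LEAST e::nat. 0 < e \<and> xpow (int e) ` U = U) else \<infinity>)"

text \<open>Twisted scalar action: Laurent polynomial c acts on u with x acting as x^b.\<close>
definition smul_b :: "nat \<Rightarrow> (int \<Rightarrow> 'a::comm_ring_1) \<Rightarrow> (nat \<Rightarrow> int \<Rightarrow> 'a) \<Rightarrow> (nat \<Rightarrow> int \<Rightarrow> 'a)" where
  "smul_b b c u = (\<lambda>i k. \<Sum>m\<in>{m. c m \<noteq> 0}. c m * xpow (int b * m) u i k)"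

definition indep_b :: "nat \<Rightarrow> (nat \<Rightarrow> nat \<Rightarrow> int \<Rightarrow> 'a::comm_ring_1) \<Rightarrow> nat \<Rightarrow> bool" where
  "indep_b b us k \<longleftrightarrow>
     (\<forall>cs :: nat \<Rightarrow> int \<Rightarrow> 'a. (\<forall>j<k. finite {m. cs j m \<noteq> 0}) \<and>
         (\<Sum>j<k. smul_b b (cs j) (us j)) = 0 \<longrightarrow> (\<forall>j<k. cs j = 0))"

definition rk_b :: "nat \<Rightarrow> (nat \<Rightarrow> int \<Rightarrow> 'a::comm_ring_1) set \<Rightarrow> nat" where
  "rk_b b U = (GREATEST k. \<exists>us. (\<forall>j<k. us j \<in> U) \<and> indep_b b us k)"

end

theory Submission
  imports Defs "HOL-Library.FuncSet"
begin

definition slot :: "nat \<Rightarrow> nat \<Rightarrow> int \<Rightarrow> nat" where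
  "slot b i k = i*b + nat (k mod int b)"
definition dl :: "nat \<Rightarrow> int \<Rightarrow> nat \<Rightarrow> int \<Rightarrow> 'a::zero_neq_one" where
  "dl i0 k0 = (\<lambda>i k. if i = i0 \<and> k = k0 then 1 else 0)"
definition Vr :: "nat \<Rightarrow> nat \<Rightarrow> nat \<Rightarrow> (nat \<Rightarrow> int \<Rightarrow> 'a::zero) set" where
  "Vr n b r = {v \<in> laurent_vecs n. \<forall>i k. r \<le> slot b i k \<longrightarrow> v i k = 0}"
definition S0 :: "nat \<Rightarrow> (nat \<Rightarrow> int \<Rightarrow> 'a::comm_monoid_add) \<Rightarrow> 'a" where
  "S0 b v = (\<Sum>k\<in>{k. int b dvd k \<and> v 0 k \<noteq> 0}. v 0 k)"
definition UU :: "nat \<Rightarrow> nat \<Rightarrow> nat \<Rightarrow> (nat \<Rightarrow> int \<Rightarrow> 'a::ab_group_add) set" where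
  "UU n b r = {v \<in> Vr n b r. S0 b v = 0}"

lemma sum_app: "(sum f A) x = sum (\<lambda>a. f a x) A"
  by (induction A rule: infinite_finite_induct) auto

lemma row_fin: assumes "v \<in> laurent_vecs n" shows "finite {k. v i k \<noteq> 0}"
proof -
  have "{k. v i k \<noteq> 0} \<subseteq> snd ` {(i,k). v i k \<noteq> 0}" by force
  thus ?thesis using assms unfolding laurent_vecs_def by (auto intro: finite_subset)
qed

lemma S0_M: assumes "finite M" "{k. v 0 k \<noteq> 0} \<subseteq> M"
  shows "S0 b v = (\<Sum>k\<in>{k\<in>M. int b dvd k}. v 0 k)"
  unfolding S0_def using assms by (intro sum.mono_neutral_left) auto

lemma lv_add: "(u::nat\<Rightarrow>int\<Rightarrow>'a::monoid_add) \<in> laurent_vecs n \<Longrightarrow> v \<in> laurent_vecs n \<Longrightarrow> u + v \<in> laurent_vecs n"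
proof -
  assume a: "u \<in> laurent_vecs n" "v \<in> laurent_vecs n"
  have "{(i,k). (u+v) i k \<noteq> 0} \<subseteq> {(i,k). u i k \<noteq> (0::'a)} \<union> {(i,k). v i k \<noteq> 0}" by auto
  with a show ?thesis unfolding laurent_vecs_def by (auto intro: finite_subset)
qed

lemma lv_neg: "(u::nat\<Rightarrow>int\<Rightarrow>'a::group_add) \<in> laurent_vecs n \<Longrightarrow> - u \<in> laurent_vecs n"
  unfolding laurent_vecs_def by (simp add: case_prod_unfold)

lemma S0_add: assumes "u \<in> laurent_vecs n" "v \<in> laurent_vecs n"
  shows "S0 b (u + v) = S0 b u + (S0 b v :: 'a::ab_group_add)"
proof -
  let ?M = "{k. u 0 k \<noteq> 0} \<union> {k. v 0 k \<noteq> 0}"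
  have f: "finite ?M" using row_fin assms by blast
  have "S0 b (u+v) = (\<Sum>k\<in>{k\<in>?M. int b dvd k}. (u+v) 0 k)" by (rule S0_M[OF f]) auto
  also have "\<dots> = (\<Sum>k\<in>{k\<in>?M. int b dvd k}. u 0 k) + (\<Sum>k\<in>{k\<in>?M. int b dvd k}. v 0 k)"
    by (simp add: sum.distrib)
  also have "\<dots> = S0 b u + S0 b v" using S0_M[OF f, of u b] S0_M[OF f, of v b] by auto
  finally show ?thesis .
qed

lemma S0_neg: "S0 b (- u) = - (S0 b u :: 'a::ab_group_add)"
  unfolding S0_def by (simp add: sum_negf)

lemma UU_sub: "add_subgroup n (UU n b r)"
  unfolding add_subgroup_def UU_def Vr_def
  apply (intro conjI)
  subgoal by auto
  subgoal by (auto simp: laurent_vecs_def S0_def)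
  subgoal by (auto simp: lv_add S0_add)
  subgoal by (auto simp: lv_neg S0_neg)
  done

lemma xpow_lv: "v \<in> laurent_vecs n \<Longrightarrow> xpow s v \<in> laurent_vecs n"
proof -
  assume a: "v \<in> laurent_vecs n"
  have "{(i,k). xpow s v i k \<noteq> 0} = (\<lambda>(i,k). (i, k + s)) ` {(i,k). v i k \<noteq> 0}"
    unfolding xpow_def by (force simp: image_iff)
  with a show ?thesis unfolding laurent_vecs_def xpow_def by auto
qed

lemma slot_shift: assumes "int b dvd s" shows "slot b i (k - s) = slot b i k"
proof -
  have "(k - s) mod int b = k mod int b" using assms by (simp add: mod_eq_dvd_iff)
  thus ?thesis unfolding slot_def by simp
qed

lemma S0_shift: assumes "int b dvd s" shows "S0 b (xpow s v) = S0 b v"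
  unfolding S0_def xpow_def
proof (rule sum.reindex_bij_witness[of _ "\<lambda>k. k + s" "\<lambda>k. k - s"])
  fix a assume "a \<in> {k. int b dvd k \<and> v 0 (k - s) \<noteq> 0}"
  thus "a - s + s = a" "a - s \<in> {k. int b dvd k \<and> v 0 k \<noteq> 0}" "v 0 (a - s) = v 0 (a - s)"
    using assms by auto
next
  fix a assume "a \<in> {k. int b dvd k \<and> v 0 k \<noteq> 0}"
  thus "a + s - s = a" "a + s \<in> {k. int b dvd k \<and> v 0 (k - s) \<noteq> 0}"
    using assms by auto
qed

lemma UU_shift: assumes "int b dvd s" "v \<in> UU n b r" shows "xpow s v \<in> UU n b r"
proof -
  have v: "v \<in> laurent_vecs n" "\<And>i k. r \<le> slot b i k \<Longrightarrow> v i k = 0" "S0 b v = 0"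
    using assms(2) unfolding UU_def Vr_def by auto
  have "xpow s v i k = 0" if "r \<le> slot b i k" for i k
    unfolding xpow_def using v(2)[of i "k - s"] that slot_shift[OF assms(1)] by simp
  moreover have "S0 b (xpow s v) = 0" using S0_shift[OF assms(1), of v] v(3) by simp
  ultimately show ?thesis using xpow_lv[OF v(1)] unfolding UU_def Vr_def by auto
qed

lemma smul_M: assumes "finite M" "{m. c m \<noteq> 0} \<subseteq> M"
  shows "smul_b b c u i k = (\<Sum>m\<in>M. c m * u i (k - int b * m))"
  unfolding smul_b_def xpow_def using assms by (intro sum.mono_neutral_left) auto

lemma smul_sub: "smul_b b c (u - v) = smul_b b c u - smul_b b c (v :: nat \<Rightarrow> int \<Rightarrow> 'a::comm_ring_1)"
  unfolding smul_b_def xpow_def by (auto simp: sum_subtractf right_diff_distrib intro!: ext)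

lemma smul_dl: assumes "0 < b" "finite {m. c m \<noteq> 0}"
  shows "smul_b b c (dl i0 k0) i k = (if i = i0 \<and> int b dvd (k - k0) then c ((k - k0) div int b) else (0::'a::comm_ring_1))"
proof -
  have e: "smul_b b c (dl i0 k0) i k = (\<Sum>m\<in>{m. c m \<noteq> 0}. c m * (if i = i0 \<and> k - int b * m = k0 then 1 else 0))"
    unfolding smul_b_def xpow_def dl_def by simp
  show ?thesis
  proof (cases "i = i0 \<and> int b dvd (k - k0)")
    case True
    define m0 where "m0 = (k - k0) div int b"
    have "\<And>m. (k - int b * m = k0) = (m = m0)"
      using True assms(1) unfolding m0_def by (auto elim!: dvdE)
    hence "smul_b b c (dl i0 k0) i k = (\<Sum>m\<in>{m. c m \<noteq> 0}. if m = m0 then c m else 0)"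
      using e True by (auto intro!: sum.cong)
    also have "\<dots> = c m0" using assms(2) by (auto simp: sum.delta)
    finally show ?thesis using True m0_def by simp
  next
    case False
    hence "\<And>m. \<not> (i = i0 \<and> k - int b * m = k0)" by (auto simp: algebra_simps)
    hence "smul_b b c (dl i0 k0) i k = 0" using e by (auto intro!: sum.neutral)
    thus ?thesis by (simp only: if_not_P[OF False])
  qed
qed

definition gen :: "nat \<Rightarrow> nat \<Rightarrow> nat \<Rightarrow> int \<Rightarrow> 'a::{zero_neq_one,ab_group_add}" where
  "gen b j = (if j = 0 then dl 0 0 - dl 0 (int b) else dl (j div b) (int (j mod b)))"

lemma dl_lv: "i0 < n \<Longrightarrow> (dl i0 k0 :: nat \<Rightarrow> int \<Rightarrow> 'a::zero_neq_one) \<in> laurent_vecs n"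
proof -
  assume "i0 < n"
  moreover have "{(i,k). (dl i0 k0 :: nat \<Rightarrow> int \<Rightarrow> 'a) i k \<noteq> 0} = {(i0,k0)}" by (auto simp: dl_def)
  ultimately show ?thesis unfolding laurent_vecs_def by (auto simp: dl_def)
qed

lemma S0_dl: "S0 b (dl i0 k0 :: nat \<Rightarrow> int \<Rightarrow> 'a::{zero_neq_one,comm_monoid_add}) = (if i0 = 0 \<and> int b dvd k0 then 1 else 0)"
proof -
  have "S0 b (dl i0 k0 :: nat \<Rightarrow> int \<Rightarrow> 'a) = (\<Sum>k\<in>{k\<in>{k0}. int b dvd k}. dl i0 k0 0 k)"
    by (rule S0_M) (auto simp: dl_def split: if_splits)
  moreover have "{k\<in>{k0}. int b dvd k} = (if int b dvd k0 then {k0} else {})" by auto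
  ultimately show ?thesis by (auto simp: dl_def)
qed

lemma gen_UU: assumes "0 < b" "j < r" "r \<le> n * b"
  shows "(gen b j :: nat \<Rightarrow> int \<Rightarrow> 'a::{zero_neq_one,ab_group_add}) \<in> UU n b r"
proof (cases "j = 0")
  case True
  have n: "0 < n" using assms by (cases n) auto
  have d1: "(dl 0 0 :: nat \<Rightarrow> int \<Rightarrow> 'a) \<in> laurent_vecs n" by (rule dl_lv[OF n])
  have d2: "(dl 0 (int b) :: nat \<Rightarrow> int \<Rightarrow> 'a) \<in> laurent_vecs n" by (rule dl_lv[OF n])
  have eq: "(dl 0 0 - dl 0 (int b) :: nat \<Rightarrow> int \<Rightarrow> 'a) = dl 0 0 + - dl 0 (int b)"
    by (rule diff_conv_add_uminus)
  have lv: "(dl 0 0 - dl 0 (int b) :: nat \<Rightarrow> int \<Rightarrow> 'a) \<in> laurent_vecs n"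
    unfolding eq by (rule lv_add[OF d1 lv_neg[OF d2]])
  have "S0 b (dl 0 0 - dl 0 (int b) :: nat \<Rightarrow> int \<Rightarrow> 'a) = S0 b (dl 0 0 :: nat \<Rightarrow> int \<Rightarrow> 'a) + - S0 b (dl 0 (int b) :: nat \<Rightarrow> int \<Rightarrow> 'a)"
    unfolding eq S0_add[OF d1 lv_neg[OF d2]] S0_neg ..
  hence S: "S0 b (dl 0 0 - dl 0 (int b) :: nat \<Rightarrow> int \<Rightarrow> 'a) = 0" by (simp add: S0_dl)
  have sl: "(dl 0 0 - dl 0 (int b) :: nat \<Rightarrow> int \<Rightarrow> 'a) i k = 0" if "r \<le> slot b i k" for i k
    using assms True that by (auto simp: dl_def slot_def)
  show ?thesis using True lv S sl unfolding gen_def UU_def Vr_def by auto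
next
  case False
  have jn: "j div b < n" using assms by (intro less_mult_imp_div_less) simp
  have S: "S0 b (dl (j div b) (int (j mod b)) :: nat \<Rightarrow> int \<Rightarrow> 'a) = 0"
  proof -
    have "\<not> (j div b = 0 \<and> int b dvd int (j mod b))"
    proof
      assume a: "j div b = 0 \<and> int b dvd int (j mod b)"
      hence "b dvd j mod b" by (simp only: of_nat_dvd_iff)
      hence "b dvd j" by (simp add: dvd_mod_iff)
      then obtain q where "j = b * q" by (elim dvdE)
      with a False assms(1) show False by simp
    qed
    thus ?thesis by (simp add: S0_dl)
  qed
  have m: "int (j mod b) mod int b = int (j mod b)" by (simp flip: of_nat_mod)
  have sl: "slot b (j div b) (int (j mod b)) = j" unfolding slot_def m nat_int
    by (rule div_mult_mod_eq)
  have z: "(dl (j div b) (int (j mod b)) :: nat \<Rightarrow> int \<Rightarrow> 'a) i k = 0" if "r \<le> slot b i k" for i k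
    using sl that assms(2) by (auto simp: dl_def)
  show ?thesis using False dl_lv[OF jn] S z unfolding gen_def UU_def Vr_def
    by auto
qed

lemma gen_smul_zero: assumes "0 < b" "finite {m. c m \<noteq> 0}"
  and "smul_b b c (gen b j) i k \<noteq> (0::'a::comm_ring_1)"
  shows "slot b i k = j"
proof (cases "j = 0")
  case True
  hence "smul_b b c (dl 0 0) i k - smul_b b c (dl 0 (int b)) i k \<noteq> (0::'a)"
    using assms(3) by (simp add: gen_def smul_sub)
  hence "i = 0 \<and> (int b dvd k \<or> int b dvd (k - int b))"
    using smul_dl[OF assms(1,2)] by (auto split: if_splits)
  hence "i = 0 \<and> k mod int b = 0" by (auto simp: dvd_eq_mod_eq_0 mod_diff_right_eq[symmetric])
  thus ?thesis using True by (simp add: slot_def)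
next
  case False
  hence "i = j div b \<and> int b dvd (k - int (j mod b))"
    using assms(3) smul_dl[OF assms(1,2)] by (auto simp: gen_def split: if_splits)
  hence "i = j div b \<and> k mod int b = int (j mod b)"
    using assms(1) by (auto simp: mod_eq_dvd_iff[symmetric] zmod_int)
  thus ?thesis unfolding slot_def by (simp add: nat_int)
qed

lemma const_zero: assumes "finite {m::int. c m \<noteq> 0}" "\<And>m. c m = c (m - 1)"
  shows "c = 0"
proof -
  have all: "c m = c 0" for m
  proof (induction m rule: int_induct[where k=0])
    case (step1 i) thus ?case using assms(2)[of "i+1"] by simp
  next
    case (step2 i) thus ?case using assms(2)[of i] by simp
  qed simp
  have "c 0 \<noteq> 0 \<Longrightarrow> {m. c m \<noteq> 0} = UNIV"
    using all by (metis (mono_tags, lifting) UNIV_I subsetI subset_antisym mem_Collect_eq)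
  hence "c 0 = 0" using assms(1) infinite_UNIV_int by metis
  thus ?thesis using all by (metis zero_fun_def ext)
qed

lemma gen_indep: assumes "0 < b" shows "indep_b b (gen b :: nat \<Rightarrow> nat \<Rightarrow> int \<Rightarrow> 'a::comm_ring_1) r"
  unfolding indep_b_def
proof (rule allI, rule impI, elim conjE)
  fix cs :: "nat \<Rightarrow> int \<Rightarrow> 'a"
  assume fin: "\<forall>j<r. finite {m. cs j m \<noteq> 0}" and s0: "(\<Sum>j<r. smul_b b (cs j) (gen b j)) = 0"
  have val: "(\<Sum>j<r. smul_b b (cs j) (gen b j) i k) = 0" for i k
    using fun_cong[OF fun_cong[OF s0, of i], of k] by (simp add: sum_app)
  show "\<forall>j<r. cs j = 0"
  proof (intro allI impI)
    fix j assume jr: "j < r"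
    have key: "smul_b b (cs j) (gen b j) i k = 0" if "slot b i k = j" for i k
    proof -
      have "(\<Sum>j'<r. smul_b b (cs j') (gen b j') i k) = smul_b b (cs j) (gen b j) i k
              + (\<Sum>j'\<in>{..<r} - {j}. smul_b b (cs j') (gen b j') i k)"
        using jr by (simp add: sum.remove)
      moreover have "(\<Sum>j'\<in>{..<r} - {j}. smul_b b (cs j') (gen b j') i k) = 0"
      proof (rule sum.neutral, intro ballI)
        fix x assume "x \<in> {..<r} - {j}"
        thus "smul_b b (cs x) (gen b x) i k = 0"
          using gen_smul_zero[OF assms, of "cs x" x i k] fin that by auto
      qed
      ultimately show ?thesis using val by simp
    qed
    show "cs j = 0"
    proof (cases "j = 0")
      case False
      have "cs j m = 0" for m
      proof -
        have sl: "slot b (j div b) (int (j mod b) + int b * m) = j"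
          unfolding slot_def using assms
          by (simp add: nat_int)
        have "smul_b b (cs j) (gen b j) (j div b) (int (j mod b) + int b * m) = cs j m"
          using False smul_dl[OF assms, of "cs j"] fin jr assms by (simp add: gen_def)
        thus ?thesis using key[OF sl] by simp
      qed
      thus ?thesis by auto
    next
      case True
      have "cs 0 m = cs 0 (m - 1)" for m
      proof -
        have sl: "slot b 0 (int b * m) = 0" unfolding slot_def by simp
        have d0: "int b * m - int b = int b * (m - 1)" by (simp add: algebra_simps)
        have d: "(int b * m - int b) div int b = m - 1" using assms unfolding d0 by simp
        have "smul_b b (cs 0) (gen b 0) 0 (int b * m) = cs 0 m - cs 0 (m - 1)"
          using smul_dl[OF assms, of "cs 0"] fin jr True assms d by (simp add: gen_def smul_sub)
        moreover have "smul_b b (cs j) (gen b j) 0 (int b * m) = 0" using key[of 0 "int b * m"] sl True by simp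
        ultimately show ?thesis using True by simp
      qed
      thus ?thesis using const_zero fin jr True by blast
    qed
  qed
qed


lemma card_funs:
  fixes B :: "(nat \<times> int) set"
  assumes fB: "finite B" and fa: "finite (UNIV :: 'a set)"
  shows "finite {f :: nat \<Rightarrow> int \<Rightarrow> 'a::zero. \<forall>j m. f j m \<noteq> 0 \<longrightarrow> (j,m) \<in> B}
     \<and> card {f :: nat \<Rightarrow> int \<Rightarrow> 'a::zero. \<forall>j m. f j m \<noteq> 0 \<longrightarrow> (j,m) \<in> B} = card (UNIV :: 'a set) ^ card B"
proof -
  let ?F = "{f :: nat \<Rightarrow> int \<Rightarrow> 'a. \<forall>j m. f j m \<noteq> 0 \<longrightarrow> (j,m) \<in> B}"
  let ?P = "PiE B (\<lambda>_. UNIV :: 'a set)"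
  define \<phi> where "\<phi> = (\<lambda>g :: nat \<times> int \<Rightarrow> 'a. \<lambda>j m. if (j,m) \<in> B then g (j,m) else 0)"
  define \<psi> where "\<psi> = (\<lambda>f :: nat \<Rightarrow> int \<Rightarrow> 'a. restrict (\<lambda>x. f (fst x) (snd x)) B)"
  have bij: "bij_betw \<phi> ?P ?F"
  proof (rule bij_betw_byWitness[where f' = \<psi>])
    show "\<forall>a\<in>?P. \<psi> (\<phi> a) = a"
    proof
      fix a assume a: "a \<in> ?P"
      have "\<psi> (\<phi> a) = restrict a B" unfolding \<psi>_def \<phi>_def by (auto simp: restrict_def)
      also have "\<dots> = a" using a by (simp add: PiE_restrict)
      finally show "\<psi> (\<phi> a) = a" .
    qed
    show "\<forall>f\<in>?F. \<phi> (\<psi> f) = f"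
    proof
      fix f assume f: "f \<in> ?F"
      show "\<phi> (\<psi> f) = f" unfolding \<psi>_def \<phi>_def
      proof (intro ext)
        fix j m show "(if (j, m) \<in> B then restrict (\<lambda>x. f (fst x) (snd x)) B (j, m) else 0) = f j m"
          using f by (cases "(j,m) \<in> B") auto
      qed
    qed
    show "\<phi> ` ?P \<subseteq> ?F" unfolding \<phi>_def by auto
    show "\<psi> ` ?F \<subseteq> ?P" unfolding \<psi>_def by auto
  qed
  have "finite ?P" using fB fa by (simp add: finite_PiE)
  hence "finite ?F" using bij bij_betw_finite by blast
  moreover have "card ?F = card ?P" using bij by (simp add: bij_betw_same_card)
  moreover have "card ?P = card (UNIV :: 'a set) ^ card B" using fB by (simp add: card_PiE)
  ultimately show ?thesis by simp
qed

lemma slot_inj: assumes "0 < b" "slot b i k = slot b i' k'" "k div int b = k' div int b"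
  shows "i = i' \<and> k = k'"
proof -
  have x: "nat (k mod int b) < b" "nat (k' mod int b) < b" using assms(1) by (simp_all add: nat_less_iff)
  have "(i*b + nat (k mod int b)) div b = i" "(i'*b + nat (k' mod int b)) div b = i'"
    using x assms(1) by simp_all
  hence ii: "i = i'" using assms(2) unfolding slot_def by metis
  hence "nat (k mod int b) = nat (k' mod int b)" using assms(2) unfolding slot_def by simp
  moreover have "k mod int b \<ge> 0" "k' mod int b \<ge> 0" using assms(1) by simp_all
  ultimately have "k mod int b = k' mod int b" by (simp add: eq_nat_nat_iff)
  hence "k = k'" using assms(3) by (metis div_mult_mod_eq)
  with ii show ?thesis by simp
qed

lemma div_range: assumes "0 < b" "- int A \<le> k" "k \<le> int A + int b * int D"
  shows "- int A \<le> k div int b \<and> k div int b \<le> int A + int D"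
proof
  have "- int A * int b \<le> - int A" using assms(1) by (simp add: mult_le_cancel_left1)
  hence "- int A * int b \<le> k" using assms(2) by linarith
  hence "(- int A * int b) div int b \<le> k div int b" using assms(1) by (intro zdiv_mono1) auto
  moreover have "(- int A * int b) div int b = - int A"
    by (rule nonzero_mult_div_cancel_right) (use assms(1) in simp)
  ultimately show "- int A \<le> k div int b" by simp
next
  have "k div int b \<le> (int A + int b * int D) div int b" using assms(1,3) by (intro zdiv_mono1) auto
  also have "\<dots> = int A div int b + int D" using assms(1) by simp
  also have "\<dots> \<le> int A + int D" unfolding zdiv_int[symmetric] by simp
  finally show "k div int b \<le> int A + int D" .
qed


lemma finite_bound:
  assumes "finite (S :: (nat \<times> int) set)"
  shows "\<exists>A::nat. \<forall>(i,k)\<in>S. \<bar>k\<bar> \<le> int A"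
proof -
  let ?A = "Max (insert 0 ((\<lambda>(i,k). nat \<bar>k\<bar>) ` S))"
  have "\<forall>(i,k)\<in>S. nat \<bar>k\<bar> \<le> ?A" using assms by (auto intro!: Max_ge)
  hence "\<forall>(i,k)\<in>S. \<bar>k\<bar> \<le> int ?A" by auto
  thus ?thesis by blast
qed

lemma rank_bound:
  fixes us :: "nat \<Rightarrow> nat \<Rightarrow> int \<Rightarrow> 'a::field"
  assumes fa: "finite (UNIV :: 'a set)" and b: "0 < b"
    and U: "\<forall>j<K. us j \<in> Vr n b r" and rK: "r < K"
  shows "\<not> indep_b b us K"
proof
  assume ind: "indep_b b us K"
  have lv: "\<And>j. j < K \<Longrightarrow> us j \<in> laurent_vecs n" using U unfolding Vr_def by auto
  have "finite (\<Union>j<K. {(i,k). us j i k \<noteq> 0})"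
  proof (rule finite_UN_I)
    fix j assume "j \<in> {..<K}"
    thus "finite {(i,k). us j i k \<noteq> 0}" using lv[of j] unfolding laurent_vecs_def by simp
  qed simp
  then obtain A :: nat where A: "\<forall>(i,k)\<in>(\<Union>j<K. {(i,k). us j i k \<noteq> 0}). \<bar>k\<bar> \<le> int A"
    using finite_bound by blast
  have Ab: "\<And>j i k. j < K \<Longrightarrow> us j i k \<noteq> 0 \<Longrightarrow> \<bar>k\<bar> \<le> int A" using A by blast
  have sl: "slot b i k < r" if j: "j < K" and nz: "us j i k \<noteq> 0" for j i k
  proof (rule ccontr)
    have z: "\<forall>i k. r \<le> slot b i k \<longrightarrow> us j i k = 0" using U j unfolding Vr_def by blast
    assume "\<not> slot b i k < r"
    hence "r \<le> slot b i k" by simp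
    with z nz show False by blast
  qed
  define D where "D = r * (2*A+1) + 1"
  define B where "B = {..<K} \<times> {0..<int D}"
  define Dom where "Dom = {cs :: nat \<Rightarrow> int \<Rightarrow> 'a. \<forall>j m. cs j m \<noteq> 0 \<longrightarrow> (j,m) \<in> B}"
  define T where "T = {(i,k). slot b i k < r \<and> - int A \<le> k \<and> k \<le> int A + int b * int D}"
  define Cod where "Cod = {f :: nat \<Rightarrow> int \<Rightarrow> 'a. \<forall>i k. f i k \<noteq> 0 \<longrightarrow> (i,k) \<in> T}"
  define Phi where "Phi = (\<lambda>cs :: nat \<Rightarrow> int \<Rightarrow> 'a. \<lambda>i k. \<Sum>j<K. \<Sum>m\<in>{0..<int D}. cs j m * us j i (k - int b * m))"
  have sumPhi: "(\<Sum>j<K. smul_b b (cs j) (us j)) = Phi cs"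
    if "\<forall>j<K. {m. cs j m \<noteq> 0} \<subseteq> {0..<int D}" for cs
  proof (intro ext)
    fix i k
    show "(\<Sum>j<K. smul_b b (cs j) (us j)) i k = Phi cs i k"
      unfolding Phi_def sum_app using that by (auto intro!: sum.cong smul_M)
  qed
  have gT: "(\<lambda>(i,k). (slot b i k, k div int b)) ` T \<subseteq> {..<r} \<times> {- int A .. int A + int D}"
  proof
    fix x assume "x \<in> (\<lambda>(i,k). (slot b i k, k div int b)) ` T"
    then obtain i k where x: "x = (slot b i k, k div int b)" and t: "(i,k) \<in> T" by auto
    from t have "slot b i k < r" "- int A \<le> k" "k \<le> int A + int b * int D" unfolding T_def by auto
    with div_range[OF b, of A k D] show "x \<in> {..<r} \<times> {- int A .. int A + int D}" unfolding x by simp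
  qed
  have injT: "inj_on (\<lambda>(i,k). (slot b i k, k div int b)) T"
  proof (rule inj_onI)
    fix x y assume "x \<in> T" "y \<in> T" and e: "(\<lambda>(i,k). (slot b i k, k div int b)) x = (\<lambda>(i,k). (slot b i k, k div int b)) y"
    obtain i k where x: "x = (i,k)" by fastforce
    obtain i' k' where y: "y = (i',k')" by fastforce
    from e have "slot b i k = slot b i' k'" "k div int b = k' div int b" unfolding x y by simp_all
    from slot_inj[OF b this] show "x = y" unfolding x y by simp
  qed
  have finT: "finite T"
  proof (rule inj_on_finite[OF injT gT])
  qed simp
  have cT: "card T \<le> r * (2*A + D + 1)"
  proof -
    have "card T \<le> card ({..<r} \<times> {- int A .. int A + int D})"
      by (rule card_inj_on_le[OF injT gT]) simp
    also have "\<dots> = r * (2*A + D + 1)" by (simp add: card_cartesian_product nat_add_distrib nat_mult_distrib)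
    finally show ?thesis .
  qed
  have fB: "finite B" unfolding B_def by simp
  have cB: "card B = K * D" unfolding B_def by (simp add: card_cartesian_product)
  have fCod: "finite Cod" and cCod: "card Cod = card (UNIV::'a set) ^ card T"
    using card_funs[OF finT fa] unfolding Cod_def by auto
  have cDom: "card Dom = card (UNIV::'a set) ^ (K * D)"
    using card_funs[OF fB fa] cB unfolding Dom_def by auto
  have img: "Phi ` Dom \<subseteq> Cod"
  proof
    fix f assume "f \<in> Phi ` Dom"
    then obtain cs where cs: "cs \<in> Dom" and f: "f = Phi cs" by blast
    show "f \<in> Cod" unfolding Cod_def
    proof (intro CollectI allI impI)
      fix i k assume "f i k \<noteq> 0"
      hence "(\<Sum>j<K. \<Sum>m\<in>{0..<int D}. cs j m * us j i (k - int b * m)) \<noteq> 0"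
        unfolding f Phi_def by simp
      then obtain j where j: "j < K" and "(\<Sum>m\<in>{0..<int D}. cs j m * us j i (k - int b * m)) \<noteq> 0"
        by (meson lessThan_iff sum.not_neutral_contains_not_neutral)
      then obtain m where m: "m \<in> {0..<int D}" and "cs j m * us j i (k - int b * m) \<noteq> 0"
        by (meson sum.not_neutral_contains_not_neutral)
      hence nz: "us j i (k - int b * m) \<noteq> 0" by auto
      have "slot b i k < r" using sl[OF j nz] slot_shift[of b "int b * m" i k] by simp
      moreover have "\<bar>k - int b * m\<bar> \<le> int A" using Ab[OF j nz] .
      moreover have "0 \<le> int b * m" using m by auto
      moreover have "int b * m \<le> int b * int D" using m by (intro mult_left_mono) auto
      ultimately show "(i,k) \<in> T" unfolding T_def by auto
    qed
  qed
  have "card (UNIV :: 'a set) \<ge> 2"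
  proof -
    have "card {0::'a, 1} \<le> card (UNIV :: 'a set)" using fa by (intro card_mono) auto
    thus ?thesis by simp
  qed
  moreover have "r * (2*A + D + 1) < K * D"
  proof -
    have "r * (2*A + D + 1) = r * D + r * (2*A+1)" by (simp add: algebra_simps)
    also have "\<dots> < r * D + D" unfolding D_def by simp
    also have "\<dots> = Suc r * D" by simp
    also have "\<dots> \<le> K * D" using rK by (intro mult_right_mono) auto
    finally show ?thesis .
  qed
  ultimately have "card Cod < card Dom"
  proof -
    assume p2: "2 \<le> card (UNIV :: 'a set)" and lt: "r * (2*A + D + 1) < K * D"
    have "card Cod \<le> card (UNIV :: 'a set) ^ (r * (2*A + D + 1))"
      unfolding cCod by (rule power_increasing[OF cT]) (use p2 in simp)
    also have "\<dots> < card (UNIV :: 'a set) ^ (K * D)"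
      by (rule power_strict_increasing[OF lt]) (use p2 in simp)
    finally show ?thesis unfolding cDom .
  qed
  hence "\<not> inj_on Phi Dom" using card_inj_on_le[of Phi Dom Cod] img fCod by linarith
  then obtain c1 c2 where c1: "c1 \<in> Dom" and c2: "c2 \<in> Dom" and ne: "c1 \<noteq> c2" and eq: "Phi c1 = Phi c2"
    unfolding inj_on_def by blast
  define cs where "cs = (\<lambda>j m. c1 j m - c2 j m)"
  have supp: "\<forall>j<K. {m. cs j m \<noteq> 0} \<subseteq> {0..<int D}"
  proof (intro allI impI subsetI)
    fix j m assume "m \<in> {m. cs j m \<noteq> 0}"
    hence "c1 j m \<noteq> 0 \<or> c2 j m \<noteq> 0" unfolding cs_def by auto
    thus "m \<in> {0..<int D}" using c1 c2 unfolding Dom_def B_def by auto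
  qed
  have "Phi cs = (\<lambda>i k. Phi c1 i k - Phi c2 i k)"
    unfolding Phi_def cs_def by (simp add: left_diff_distrib sum_subtractf)
  hence "Phi cs = 0" using eq by (auto intro!: ext)
  hence "(\<Sum>j<K. smul_b b (cs j) (us j)) = 0" using sumPhi[OF supp] by simp
  moreover have "\<forall>j<K. finite {m. cs j m \<noteq> 0}" using supp by (meson finite_atLeastLessThan_int finite_subset)
  ultimately have z: "\<forall>j<K. cs j = 0" using ind unfolding indep_b_def by blast
  have "c1 = c2"
  proof (intro ext)
    fix j m show "c1 j m = c2 j m"
    proof (cases "j < K")
      case True thus ?thesis using z fun_cong[of "cs j" 0 m] unfolding cs_def by simp
    next
      case False
      hence "c1 j m = 0" "c2 j m = 0" using c1 c2 unfolding Dom_def B_def by blast+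
      thus ?thesis by simp
    qed
  qed
  with ne show False by simp
qed


lemma xpow_xpow: "xpow s (xpow t v) = xpow (s + t) v"
  unfolding xpow_def by (simp add: algebra_simps)

lemma xpow_0: "xpow 0 v = v"
  unfolding xpow_def by simp

lemma UU_inv: assumes "0 < b"
  shows "xpow (int b) ` (UU n b r :: (nat \<Rightarrow> int \<Rightarrow> 'a::ab_group_add) set) = UU n b r"
proof
  show "xpow (int b) ` UU n b r \<subseteq> (UU n b r :: (nat \<Rightarrow> int \<Rightarrow> 'a) set)"
    using UU_shift[of b "int b"] by auto
next
  show "(UU n b r :: (nat \<Rightarrow> int \<Rightarrow> 'a) set) \<subseteq> xpow (int b) ` UU n b r"
  proof
    fix v :: "nat \<Rightarrow> int \<Rightarrow> 'a" assume v: "v \<in> UU n b r"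
    have "xpow (- int b) v \<in> UU n b r" using UU_shift[OF _ v, of "- int b"] by simp
    moreover have "v = xpow (int b) (xpow (- int b) v)" by (simp add: xpow_xpow xpow_0)
    ultimately show "v \<in> xpow (int b) ` UU n b r" by blast
  qed
qed

lemma UU_not_inv: assumes "0 < b" "0 < r" "r \<le> n * b" "0 < e" "e < b"
  shows "xpow (int e) ` (UU n b r :: (nat \<Rightarrow> int \<Rightarrow> 'a::field) set) \<noteq> UU n b r"
proof
  assume inv: "xpow (int e) ` (UU n b r :: (nat \<Rightarrow> int \<Rightarrow> 'a) set) = UU n b r"
  show False
  proof (cases "e < r")
    case True
    have g: "(gen b e :: nat \<Rightarrow> int \<Rightarrow> 'a) = dl 0 (int e)"
      using assms(4,5) by (simp add: gen_def)
    have "(dl 0 (int e) :: nat \<Rightarrow> int \<Rightarrow> 'a) \<in> UU n b r" unfolding g[symmetric] by (rule gen_UU[OF assms(1) True assms(3)])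
    then obtain w where w: "w \<in> UU n b r" and we: "(dl 0 (int e) :: nat \<Rightarrow> int \<Rightarrow> 'a) = xpow (int e) w"
      using inv by blast
    have "w = dl 0 0"
    proof (intro ext)
      fix i k
      have "w i k = xpow (int e) w i (k + int e)" unfolding xpow_def by simp
      also have "\<dots> = dl 0 0 i k" unfolding we[symmetric] by (simp add: dl_def)
      finally show "w i k = dl 0 0 i k" .
    qed
    hence "S0 b w = (1::'a)" by (simp add: S0_dl)
    moreover have "S0 b w = 0" using w unfolding UU_def by simp
    ultimately show False by simp
  next
    case False
    have g: "(gen b 0 :: nat \<Rightarrow> int \<Rightarrow> 'a) \<in> UU n b r" using gen_UU[OF assms(1) assms(2) assms(3)] .
    hence "xpow (int e) (gen b 0) \<in> (UU n b r :: (nat \<Rightarrow> int \<Rightarrow> 'a) set)" using inv by blast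
    moreover have "slot b 0 (int e) = e" unfolding slot_def using assms(5)
      by (simp flip: of_nat_mod)
    ultimately have "xpow (int e) (gen b 0 :: nat \<Rightarrow> int \<Rightarrow> 'a) 0 (int e) = 0"
      using False unfolding UU_def Vr_def by auto
    moreover have "xpow (int e) (gen b 0 :: nat \<Rightarrow> int \<Rightarrow> 'a) 0 (int e) = 1"
      using assms(1) by (simp add: xpow_def gen_def dl_def)
    ultimately show False by simp
  qed
qed

lemma UU_e: assumes "0 < b" "0 < r" "r \<le> n * b"
  shows "e_inv (UU n b r :: (nat \<Rightarrow> int \<Rightarrow> 'a::field) set) = enat b"
proof -
  have P: "0 < b \<and> xpow (int b) ` (UU n b r :: (nat \<Rightarrow> int \<Rightarrow> 'a) set) = UU n b r"
    using assms(1) UU_inv by blast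
  have L: "(LEAST e::nat. 0 < e \<and> xpow (int e) ` (UU n b r :: (nat \<Rightarrow> int \<Rightarrow> 'a) set) = UU n b r) = b"
  proof (rule Least_equality)
    show "0 < b \<and> xpow (int b) ` (UU n b r :: (nat \<Rightarrow> int \<Rightarrow> 'a) set) = UU n b r" by (rule P)
  next
    fix y assume y: "0 < y \<and> xpow (int y) ` (UU n b r :: (nat \<Rightarrow> int \<Rightarrow> 'a) set) = UU n b r"
    show "b \<le> y"
    proof (rule ccontr)
      assume "\<not> b \<le> y"
      hence "y < b" by simp
      with UU_not_inv[OF assms, of y] y show False by blast
    qed
  qed
  show ?thesis unfolding e_inv_def using P L by (auto split: if_splits)
qed

theorem lemma6p19:
  fixes p n b r :: nat
  assumes "prime p" and "card (UNIV :: 'a set) = p"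
    and "0 < n" and "0 < b" and "0 < r" and "r \<le> n * b"
  shows "\<exists>U :: (nat \<Rightarrow> int \<Rightarrow> 'a::field) set.
           add_subgroup n U \<and> e_inv U = enat b \<and> rk_b b U = r"
proof (intro exI conjI)
  have fa: "finite (UNIV :: 'a set)"
    using assms(1,2) prime_gt_0_nat card_ge_0_finite by metis
  show "add_subgroup n (UU n b r :: (nat \<Rightarrow> int \<Rightarrow> 'a) set)" by (rule UU_sub)
  show "e_inv (UU n b r :: (nat \<Rightarrow> int \<Rightarrow> 'a) set) = enat b" using UU_e assms(4-6) by blast
  show "rk_b b (UU n b r :: (nat \<Rightarrow> int \<Rightarrow> 'a) set) = r"
    unfolding rk_b_def
  proof (rule Greatest_equality)
    show "\<exists>us. (\<forall>j<r. us j \<in> (UU n b r :: (nat \<Rightarrow> int \<Rightarrow> 'a) set)) \<and> indep_b b us r"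
      using gen_UU[OF assms(4) _ assms(6)] gen_indep[OF assms(4)] by blast
  next
    fix y assume "\<exists>us. (\<forall>j<y. us j \<in> (UU n b r :: (nat \<Rightarrow> int \<Rightarrow> 'a) set)) \<and> indep_b b us y"
    then obtain us where us: "\<forall>j<y. us j \<in> (UU n b r :: (nat \<Rightarrow> int \<Rightarrow> 'a) set)" and ind: "indep_b b us y"
      by blast
    show "y \<le> r"
    proof (rule ccontr)
      assume "\<not> y \<le> r"
      hence ry: "r < y" by simp
      have "\<forall>j<y. us j \<in> Vr n b r" using us unfolding UU_def by blast
      from rank_bound[OF fa assms(4) this ry] ind show False by blast
    qed
  qed
qed

end
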